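(* Let $m\ge 1$, and let $a_1,\dots,a_m\in[-1,1]$ with $\sum_{i=1}^m a_i=0$; set $p_i=(1+a_i)/m$. Let $X_1,\dots,X_n$ be i.i.d. on $[m]$ with $\Pr(X_1=i)=p_i$, let $h(x,y)=\mathbb{1}(x=y)$, $U_n=\binom{n}{2}^{-1}\sum_{1\le i<j\le n}h(X_i,X_j)$, and $\hat h(i)=\frac{1}{n-1}\sum_{j\ne i}h(X_i,X_j)$ for $i\in[n]$. Let $\gamma\in(0,1)$, assume $n\ge 16/\gamma$, and set $\xi=\frac{6}{m}+\frac{8\log(4n/\gamma)}{n}$. Then with probability at least $1-\gamma$, $|\hat h(i)-U_n|\le\xi$ for all $i\in[n]$. *)

theory Defs
  imports "HOL-Probability.Probability"
begin

definition hker :: "nat \<Rightarrow> nat \<Rightarrow> real" where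
  "hker x y = (if x = y then 1 else 0)"

text \<open>U-statistic U_n for the sample X_0,...,X_{n-1} (indices shifted to 0-based).\<close>
definition Ustat :: "(nat \<Rightarrow> nat) \<Rightarrow> nat \<Rightarrow> real" where
  "Ustat X n = (\<Sum>i<n. \<Sum>j\<in>{i<..<n}. hker (X i) (X j)) / real (n choose 2)"

definition hhat :: "(nat \<Rightarrow> nat) \<Rightarrow> nat \<Rightarrow> nat \<Rightarrow> real" where
  "hhat X n i = (\<Sum>j\<in>{..<n} - {i}. hker (X i) (X j)) / (real n - 1)"

end

theory Submission
  imports Defs
begin

lemma nnint_factor:
  fixes D :: "'a pmf" and c :: real
  assumes "c \<ge> 1"
  shows "(\<integral>\<^sup>+z. ennreal (if z = y then c else 1) \<partial>D) = ennreal (1 + (c - 1) * pmf D y)"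
proof -
  have "(\<integral>\<^sup>+z. ennreal (if z = y then c else 1) \<partial>D) = (\<integral>\<^sup>+z. 1 + ennreal (c - 1) * indicator {y} z \<partial>D)"
  proof (intro nn_integral_cong)
    fix z
    have e: "ennreal c = ennreal 1 + ennreal (c - 1)"
      using assms by (subst ennreal_plus[symmetric]) auto
    show "ennreal (if z = y then c else 1) = 1 + ennreal (c - 1) * indicator {y} z"
      using e by (auto simp: indicator_def)
  qed
  also have "\<dots> = 1 + ennreal (c - 1) * pmf D y"
    by (simp add: nn_integral_add nn_integral_cmult emeasure_pmf_single)
  also have "\<dots> = ennreal (1 + (c - 1) * pmf D y)"
    using assms by (subst ennreal_plus) (auto simp: ennreal_mult)
  finally show ?thesis .
qed

lemma nnint_prod_bound:
  fixes D :: "nat pmf" and A :: "nat set" and q :: real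
  assumes fin: "finite A" and iA: "i \<notin> A" and pq: "\<And>y. pmf D y \<le> q"
  shows "(\<integral>\<^sup>+X. ennreal (\<Prod>j\<in>A. exp (hker (X i) (X j) / 2)) \<partial>Pi_pmf (insert i A) 0 (\<lambda>_. D))
          \<le> ennreal ((1 + (exp (1/2) - 1) * q) ^ card A)"
proof -
  define s :: real where "s = exp (1/2)"
  have s1: "s \<ge> 1" unfolding s_def by simp
  have hk: "exp (hker a b / 2) = (if b = a then s else 1)" for a b
    by (simp add: hker_def s_def)
  have "(\<integral>\<^sup>+X. ennreal (\<Prod>j\<in>A. exp (hker (X i) (X j) / 2)) \<partial>Pi_pmf (insert i A) 0 (\<lambda>_. D))
      = (\<integral>\<^sup>+y. \<integral>\<^sup>+f. ennreal (\<Prod>j\<in>A. exp (hker ((f(i:=y)) i) ((f(i:=y)) j) / 2)) \<partial>Pi_pmf A 0 (\<lambda>_. D) \<partial>D)"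
    by (simp add: Pi_pmf_insert[OF fin iA] nn_integral_pair_pmf' case_prod_unfold cong: if_cong)
  also have "\<dots> = (\<integral>\<^sup>+y. \<integral>\<^sup>+f. (\<Prod>j\<in>A. ennreal (if f j = y then s else 1)) \<partial>Pi_pmf A 0 (\<lambda>_. D) \<partial>D)"
  proof (intro nn_integral_cong)
    fix y f
    have "(\<Prod>j\<in>A. exp (hker ((f(i:=y)) i) ((f(i:=y)) j) / 2)) = (\<Prod>j\<in>A. (if f j = y then s else 1))"
      using iA by (intro prod.cong) (auto simp: hk)
    also have "ennreal \<dots> = (\<Prod>j\<in>A. ennreal (if f j = y then s else 1))"
      using s1 by (intro prod_ennreal[symmetric]) auto
    finally show "ennreal (\<Prod>j\<in>A. exp (hker ((f(i:=y)) i) ((f(i:=y)) j) / 2)) = (\<Prod>j\<in>A. ennreal (if f j = y then s else 1))" .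
  qed
  also have "\<dots> = (\<integral>\<^sup>+y. (\<Prod>j\<in>A. ennreal (1 + (s - 1) * pmf D y)) \<partial>D)"
    by (intro nn_integral_cong, subst nn_integral_prod_Pi_pmf[OF fin]) (simp add: nnint_factor[OF s1])
  also have "\<dots> \<le> (\<integral>\<^sup>+y. ennreal ((1 + (s - 1) * q) ^ card A) \<partial>D)"
  proof (intro nn_integral_mono)
    fix y
    have "(\<Prod>j\<in>A. ennreal (1 + (s - 1) * pmf D y)) = ennreal ((1 + (s - 1) * pmf D y) ^ card A)"
      using s1 by (simp add: ennreal_power del: ennreal_plus)
    also have "\<dots> \<le> ennreal ((1 + (s - 1) * q) ^ card A)"
      using s1 pq[of y] by (intro ennreal_leI power_mono) (auto intro: mult_left_mono)
    finally show "(\<Prod>j\<in>A. ennreal (1 + (s - 1) * pmf D y)) \<le> ennreal ((1 + (s - 1) * q) ^ card A)" .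
  qed
  also have "\<dots> = ennreal ((1 + (s - 1) * q) ^ card A)"
    by simp
  finally show ?thesis unfolding s_def .
qed

lemma tail_i:
  fixes D :: "nat pmf" and A :: "nat set" and q t :: real
  assumes fin: "finite A" and iA: "i \<notin> A" and pq: "\<And>y. pmf D y \<le> q"
  shows "measure (Pi_pmf (insert i A) 0 (\<lambda>_. D)) {X. t \<le> (\<Sum>j\<in>A. hker (X i) (X j))}
          \<le> exp (- t / 2) * (1 + (exp (1/2) - 1) * q) ^ card A"
proof -
  define M where "M = measure_pmf (Pi_pmf (insert i A) 0 (\<lambda>_. D))"
  define u where "u X = ennreal (\<Prod>j\<in>A. exp (hker (X i) (X j) / 2))" for X :: "nat \<Rightarrow> nat"
  define B where "B = (1 + (exp (1/2) - 1) * q) ^ card A"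
  have q0: "q \<ge> 0" using pq[of 0] pmf_nonneg[of D 0] by linarith
  have B0: "B \<ge> 0" unfolding B_def using q0 by (intro zero_le_power) (simp add: add_nonneg_nonneg)
  have ue: "u X = ennreal (exp ((\<Sum>j\<in>A. hker (X i) (X j)) / 2))" for X
    unfolding u_def by (simp add: exp_sum[OF fin] sum_divide_distrib)
  have sub: "{X. t \<le> (\<Sum>j\<in>A. hker (X i) (X j))} \<subseteq> {X \<in> space M. 1 \<le> ennreal (exp (- t / 2)) * u X}"
  proof
    fix X assume "X \<in> {X. t \<le> (\<Sum>j\<in>A. hker (X i) (X j))}"
    hence "t \<le> (\<Sum>j\<in>A. hker (X i) (X j))" by simp
    hence "1 \<le> exp (- t / 2) * exp ((\<Sum>j\<in>A. hker (X i) (X j)) / 2)"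
      by (simp add: exp_add[symmetric])
    thus "X \<in> {X \<in> space M. 1 \<le> ennreal (exp (- t / 2)) * u X}"
      unfolding ue M_def by (simp add: ennreal_mult[symmetric])
  qed
  have "emeasure M {X. t \<le> (\<Sum>j\<in>A. hker (X i) (X j))} \<le> emeasure M {X \<in> space M. 1 \<le> ennreal (exp (- t / 2)) * u X}"
    by (rule emeasure_mono[OF sub]) (simp add: M_def)
  also have "\<dots> \<le> ennreal (exp (- t / 2)) * (\<integral>\<^sup>+X. u X * indicator (space M) X \<partial>M)"
    by (rule nn_integral_Markov_inequality) (auto simp: M_def)
  also have "(\<integral>\<^sup>+X. u X * indicator (space M) X \<partial>M) = (\<integral>\<^sup>+X. u X \<partial>M)"
    by (simp add: M_def)
  also have "ennreal (exp (- t / 2)) * (\<integral>\<^sup>+X. u X \<partial>M) \<le> ennreal (exp (- t / 2)) * ennreal B"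
    unfolding M_def u_def B_def by (intro mult_left_mono nnint_prod_bound[OF fin iA pq]) simp
  finally have "emeasure M {X. t \<le> (\<Sum>j\<in>A. hker (X i) (X j))} \<le> ennreal (exp (- t / 2) * B)"
    using B0 by (simp add: ennreal_mult)
  hence "measure M {X. t \<le> (\<Sum>j\<in>A. hker (X i) (X j))} \<le> exp (- t / 2) * B"
    unfolding M_def using B0 by (simp add: measure_pmf.emeasure_eq_measure ennreal_le_iff)
  thus ?thesis unfolding M_def B_def .
qed

lemma choose2_real: "real (n choose 2) = real n * (real n - 1) / 2"
proof (cases n)
  case 0 thus ?thesis by simp
next
  case (Suc k)
  have "even (n * (n - 1))" by (cases "even n") auto
  thus ?thesis using Suc by (auto simp add: choose_two real_of_nat_div of_nat_diff algebra_simps)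
qed

theorem lemmaA19:
  fixes m n :: nat and a :: "nat \<Rightarrow> real" and \<gamma> :: real and D :: "nat pmf"
  assumes "m \<ge> 1"
    and "\<forall>i\<in>{1..m}. -1 \<le> a i \<and> a i \<le> 1"
    and "(\<Sum>i=1..m. a i) = 0"
    and "\<forall>i\<in>{1..m}. pmf D i = (1 + a i) / real m"
    and "0 < \<gamma>" and "\<gamma> < 1"
    and "real n \<ge> 16 / \<gamma>"
  shows "measure_pmf.prob (Pi_pmf {..<n} 0 (\<lambda>_. D))
           {X. \<forall>i<n. \<bar>hhat X n i - Ustat X n\<bar>
                 \<le> 6 / real m + 8 * ln (4 * real n / \<gamma>) / real n} \<ge> 1 - \<gamma>"
proof -
  define L where "L = ln (4 * real n / \<gamma>)"
  define T where "T = (real n - 1) * (3 / real m + 4 * L / real n)"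
  define P where "P = Pi_pmf {..<n} 0 (\<lambda>_. D)"
  define C where "C X i = (\<Sum>j\<in>{..<n}-{i}. hker (X i) (X j))" for X :: "nat \<Rightarrow> nat" and i
  have m1: "real m \<ge> 1" using assms(1) by simp
  have "16 < 16 / \<gamma>" using assms(5,6) by (simp add: less_divide_eq)
  hence n16: "real n > 16" using assms(7) by linarith
  hence n2: "n \<ge> 2" by simp
  have "1 \<le> 4 * real n / \<gamma>" using assms(5,6) n16 by (simp add: le_divide_eq)
  hence L0: "L \<ge> 0" unfolding L_def by simp
  have sum1: "(\<Sum>i=1..m. pmf D i) = 1"
  proof -
    have "(\<Sum>i=1..m. pmf D i) = (\<Sum>i=1..m. (1 + a i) / real m)"
      using assms(4) by (intro sum.cong) auto
    also have "\<dots> = (real m + (\<Sum>i=1..m. a i)) / real m"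
      by (simp add: sum_divide_distrib[symmetric] sum.distrib)
    also have "\<dots> = 1" using assms(3) m1 by simp
    finally show ?thesis .
  qed
  have pq: "pmf D y \<le> 2 / real m" for y
  proof (cases "y \<in> {1..m}")
    case True thus ?thesis using assms(2,4) m1 by (auto simp: divide_right_mono)
  next
    case False
    have "measure D {1..m} = 1" using sum1 by (simp add: measure_measure_pmf_finite)
    hence "measure D (UNIV - {1..m}) = 0" using measure_pmf.prob_compl[of "{1..m}" D] by simp
    moreover have "pmf D y \<le> measure D (UNIV - {1..m})"
      using False by (simp add: measure_pmf_single[symmetric] measure_pmf.finite_measure_mono)
    ultimately show ?thesis using m1 by simp
  qed
  have s74: "exp (1/2::real) \<le> 7/4"
  proof (rule ccontr)
    assume "\<not> ?thesis" then have "7/4 < exp (1/2::real)" by simp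
    then have "(7/4)*(7/4) < exp (1/2::real) * exp (1/2)" by (intro mult_strict_mono) auto
    also have "\<dots> = exp 1" by (simp add: mult_exp_exp)
    finally show False using exp_le by simp
  qed
  have tail: "measure P {X. T \<le> C X i} \<le> \<gamma> / real n" if i: "i < n" for i
  proof -
    have ins: "insert i ({..<n} - {i}) = {..<n}" using i by auto
    have card: "card ({..<n} - {i}) = n - 1" using i by simp
    have "measure P {X. T \<le> C X i} \<le> exp (- T / 2) * (1 + (exp (1/2) - 1) * (2 / real m)) ^ (n - 1)"
      using tail_i[of "{..<n}-{i}" i D "2/real m" T] pq unfolding P_def C_def ins card by simp
    also have "(1 + (exp (1/2) - 1) * (2 / real m)) ^ (n - 1) \<le> exp ((exp (1/2) - 1) * (2 / real m)) ^ (n - 1)"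
      using m1 by (intro power_mono exp_ge_add_one_self add_nonneg_nonneg mult_nonneg_nonneg) auto
    also have "\<dots> = exp (real (n - 1) * ((exp (1/2) - 1) * (2 / real m)))"
      by (simp only: exp_of_nat_mult)
    also have "\<dots> \<le> exp ((real n - 1) * (3 / (2 * real m)))"
    proof -
      have "(exp (1/2) - 1) * (2 / real m) \<le> 3 / (2 * real m)"
        using s74 m1 by (simp add: field_simps)
      hence "(real n - 1) * ((exp (1/2) - 1) * (2 / real m)) \<le> (real n - 1) * (3 / (2 * real m))"
        using n16 by (intro mult_left_mono) auto
      thus ?thesis using n2 by (simp only: exp_le_cancel_iff of_nat_diff) simp
    qed
    finally have 1: "measure P {X. T \<le> C X i} \<le> exp (- T / 2) * exp ((real n - 1) * (3 / (2 * real m)))"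
      by (simp add: mult_left_mono)
    have "exp (- T / 2) * exp ((real n - 1) * (3 / (2 * real m))) = exp (- (L * (2 * (real n - 1) / real n)))"
      unfolding mult_exp_exp T_def using m1 n16 by (simp add: field_simps)
    also have "\<dots> \<le> exp (- L)"
    proof -
      have "1 \<le> 2 * (real n - 1) / real n" using n16 by (simp add: field_simps)
      hence "L * 1 \<le> L * (2 * (real n - 1) / real n)" using L0 by (intro mult_left_mono) auto
      thus ?thesis by simp
    qed
    also have "exp (- L) = \<gamma> / (4 * real n)"
      unfolding L_def using assms(5) n16 by (simp add: exp_minus exp_ln)
    also have "\<dots> \<le> \<gamma> / real n" using assms(5) n16 by (simp add: frac_le)
    finally show ?thesis using 1 by linarith
  qed
  define U where "U = (\<Union>i\<in>{..<n}. {X. T \<le> C X i})"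
  have "measure P U \<le> (\<Sum>i<n. measure P {X. T \<le> C X i})"
    unfolding U_def by (rule measure_pmf.finite_measure_subadditive_finite) auto
  also have "\<dots> \<le> (\<Sum>i<n. \<gamma> / real n)" by (intro sum_mono tail) auto
  also have "\<dots> = \<gamma>" using n16 by simp
  finally have PU: "measure P U \<le> \<gamma>" .
  have det: "X \<in> {X. \<forall>i<n. \<bar>hhat X n i - Ustat X n\<bar> \<le> 6 / real m + 8 * L / real n}"
    if X: "X \<in> UNIV - U" for X
  proof -
    have CT: "C X i < T" if "i < n" for i using X that unfolding U_def by (auto simp: not_le)
    have hk0: "0 \<le> hker x y" for x y by (simp add: hker_def)
    have C0: "0 \<le> C X i" for i unfolding C_def by (intro sum_nonneg hk0)
    have TT: "T / (real n - 1) = 3 / real m + 4 * L / real n" unfolding T_def using n16 by simp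
    have xi: "3 / real m + 4 * L / real n \<le> 6 / real m + 8 * L / real n"
    proof -
      have "3 / real m \<le> 6 / real m" using m1 by (simp add: divide_right_mono)
      moreover have "4 * L / real n \<le> 8 * L / real n" using L0 n16 by (simp add: divide_right_mono)
      ultimately show ?thesis by linarith
    qed
    have Ub: "0 \<le> Ustat X n \<and> Ustat X n \<le> 6 / real m + 8 * L / real n"
    proof -
      have N0: "0 \<le> (\<Sum>i<n. \<Sum>j\<in>{i<..<n}. hker (X i) (X j))" by (intro sum_nonneg hk0)
      have "(\<Sum>i<n. \<Sum>j\<in>{i<..<n}. hker (X i) (X j)) \<le> (\<Sum>i<n. C X i)"
        unfolding C_def by (intro sum_mono sum_mono2) (auto intro: hk0)
      also have "\<dots> \<le> (\<Sum>i<n. T)" by (intro sum_mono) (auto intro: less_imp_le CT)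
      finally have N: "(\<Sum>i<n. \<Sum>j\<in>{i<..<n}. hker (X i) (X j)) \<le> real n * T" by simp
      have pos: "0 < real n * (real n - 1) / 2" using n16 by simp
      have "Ustat X n \<le> real n * T / (real n * (real n - 1) / 2)"
        unfolding Ustat_def choose2_real using pos N by (intro divide_right_mono) auto
      also have "\<dots> = 2 * (T / (real n - 1))" using n16 by (simp add: field_simps)
      also have "\<dots> = 6 / real m + 8 * L / real n" unfolding TT by simp
      finally show ?thesis unfolding Ustat_def choose2_real using pos N0 by simp
    qed
    show ?thesis
    proof (intro CollectI allI impI)
      fix i assume i: "i < n"
      have hh: "hhat X n i = C X i / (real n - 1)" unfolding hhat_def C_def by simp
      have "hhat X n i \<le> T / (real n - 1)" unfolding hh using CT[OF i] n16 by (simp add: divide_right_mono)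
      moreover have "0 \<le> hhat X n i" unfolding hh using C0 n16 by simp
      ultimately show "\<bar>hhat X n i - Ustat X n\<bar> \<le> 6 / real m + 8 * L / real n"
        using Ub TT xi by (simp add: abs_le_iff)
    qed
  qed
  have "1 - \<gamma> \<le> 1 - measure P U" using PU by simp
  also have "\<dots> = measure P (UNIV - U)" using measure_pmf.prob_compl[of U P] by simp
  also have "\<dots> \<le> measure P {X. \<forall>i<n. \<bar>hhat X n i - Ustat X n\<bar> \<le> 6 / real m + 8 * L / real n}"
    using det by (intro measure_pmf.finite_measure_mono) auto
  finally show ?thesis unfolding P_def L_def .
qed

end
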